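(* Let $q$ be a positive multiple of $24$, let $w_A,w_B:\mathbb{Z}/q\mathbb{Z}\to[0,1]$, and let $a,b:\mathbb{Z}/24\mathbb{Z}\to[0,1]$ be $a(k):=\frac{24}{q}\sum_{x\equiv k\ (\mathrm{mod}\ 24)}w_A(x)$, $b(k):=\frac{24}{q}\sum_{x\equiv k\ (\mathrm{mod}\ 24)}w_B(x)$ (sums over $x\in\mathbb{Z}/q\mathbb{Z}$). Then $$\Bigg|\sum_{\substack{m\in\mathbb{Z}/q\mathbb{Z}\\ q\nmid 24m}}\widehat{w_A}(m)\widehat{w_B}(m)\widehat{f_q}(-m)\Bigg|\le\frac1{24\sqrt5}\sqrt{\sum_{k\in\mathbb{Z}/24\mathbb{Z}}\big(a(k)-a(k)^2\big)}\sqrt{\sum_{k\in\mathbb{Z}/24\mathbb{Z}}\big(b(k)-b(k)^2\big)}.$$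
   Context: $e(\theta):=e^{2\pi i\theta}$. For $f:\mathbb{Z}/q\mathbb{Z}\to\mathbb{C}$, $\widehat f(r):=\frac1q\sum_{x\in\mathbb{Z}/q\mathbb{Z}}f(x)e(-rx/q)$, and $f_q(t):=\#\{x\in\mathbb{Z}/q\mathbb{Z}:x^2=t\}$. *)

theory Defs
  imports "HOL-Analysis.Analysis"
begin

text \<open>Z/qZ is represented by the residues {0..<q}; functions on Z/qZ are functions
  on nat of which only the values on {0..<q} matter.\<close>

definition e :: "real \<Rightarrow> complex" where
  "e \<theta> = cis (2 * pi * \<theta>)"

definition fhat :: "nat \<Rightarrow> (nat \<Rightarrow> real) \<Rightarrow> int \<Rightarrow> complex" where
  "fhat q f r = (1 / of_nat q) * (\<Sum>x<q. of_real (f x) * e (- (of_int r * of_nat x) / of_nat q))"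

definition fq :: "nat \<Rightarrow> nat \<Rightarrow> real" where
  "fq q t = real (card {x. x < q \<and> x^2 mod q = t mod q})"

definition avg24 :: "nat \<Rightarrow> (nat \<Rightarrow> real) \<Rightarrow> nat \<Rightarrow> real" where
  "avg24 q w k = (24 / real q) * (\<Sum>x\<in>{x. x < q \<and> x mod 24 = k mod 24}. w x)"

end

theory Submission
  imports Defs "HOL-Library.Real_Mod"
begin


definition ee :: "nat \<Rightarrow> int \<Rightarrow> complex" where
  "ee N k = e (of_int k / of_nat N)"

lemma ee_add: "ee N (a + b) = ee N a * ee N b"
  by (simp add: ee_def e_def cis_mult add_divide_distrib algebra_simps)

lemma e_int: "e (of_int k) = 1"
  by (simp add: e_def)

lemma ee_mult_N: "N > 0 \<Longrightarrow> ee N (int N * k) = 1"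
  by (simp add: ee_def e_def)

lemma ee_mod: assumes "N > 0" shows "ee N (k mod int N) = ee N k"
proof -
  have "k = k mod int N + int N * (k div int N)" by simp
  then have "ee N k = ee N (k mod int N) * ee N (int N * (k div int N))"
    by (metis ee_add)
  with assms show ?thesis by (simp add: ee_mult_N)
qed

lemma ee_cnj: "cnj (ee N k) = ee N (-k)"
  by (simp add: ee_def e_def cis_cnj)

lemma ee_norm[simp]: "norm (ee N k) = 1"
  by (simp add: ee_def e_def)

lemma ee_0[simp]: "ee N 0 = 1"
  by (simp add: ee_def e_def)

lemma ee_pow: "ee N (int j * t) = (ee N t) ^ j"
  by (induction j) (simp_all add: ee_add distrib_right)

lemma ee_eq_1: assumes "N > 0" "ee N t = 1" shows "int N dvd t"
proof -
  from assms(2) obtain n where "2 * pi * (of_int t / of_nat N) = of_int n * (2 * pi)"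
    unfolding ee_def e_def cis_eq_1_iff by blast
  then have "2 * pi * (of_int t / of_nat N) = 2 * pi * (of_int n :: real)" by (simp add: mult.commute)
  then have "of_int t / of_nat N = (of_int n :: real)" using pi_gt_zero by (metis mult_cancel_left mult_eq_0_iff pi_neq_zero zero_neq_numeral)
  then have "of_int t = (of_int (n * int N) :: real)" using assms(1) by (simp add: field_simps)
  then have "t = n * int N" by linarith
  then show ?thesis by simp
qed

lemma orth: assumes "N > 0"
  shows "(\<Sum>j<N. ee N (int j * t)) = (if int N dvd t then of_nat N else 0)"
proof (cases "int N dvd t")
  case True
  then obtain c where "t = int N * c" by blast
  then have "\<And>j. ee N (int j * t) = 1" using assms
    by (metis ee_mult_N mult.left_commute)
  then show ?thesis using True by simp
next
  case False
  then have ne: "ee N t \<noteq> 1" using ee_eq_1 assms by blast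
  have "(ee N t) ^ N = 1" using ee_pow[of N N t] ee_mult_N[OF assms, of t] by simp
  then show ?thesis using False ne by (simp add: ee_pow geometric_sum)
qed



lemma fhat_ee: "fhat N f r = (1 / of_nat N) * (\<Sum>x<N. of_real (f x) * ee N (- (r * int x)))"
  unfolding fhat_def ee_def by simp

lemma dvd_diff_lt: "x < N \<Longrightarrow> y < N \<Longrightarrow> int N dvd (int y - int x) \<longleftrightarrow> x = y"
proof
  assume "x < N" "y < N" "int N dvd (int y - int x)"
  then obtain c where c: "int y - int x = int N * c" by blast
  show "x = y"
  proof (rule ccontr)
    assume "x \<noteq> y"
    then have "c \<noteq> 0" using c by auto
    then have "\<bar>c\<bar> \<ge> 1" by linarith
    then have "\<bar>int N * c\<bar> \<ge> int N" by (simp add: abs_mult mult_le_cancel_left1)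
    with c \<open>x<N\<close> \<open>y<N\<close> show False by linarith
  qed
qed simp

lemma parseval:
  assumes "N > 0"
  shows "(\<Sum>j<N. (norm (fhat N f (int j)))^2) = (1 / real N) * (\<Sum>x<N. (f x)^2)"
proof -
  define S where "S j = (\<Sum>x<N. of_real (f x) * ee N (- (int j * int x)))" for j
  have cS: "cnj (S j) = (\<Sum>y<N. of_real (f y) * ee N (int j * int y))" for j
    by (simp add: S_def ee_cnj)
  have prod: "S j * cnj (S j) = (\<Sum>x<N. \<Sum>y<N. of_real (f x * f y) * ee N (int j * (int y - int x)))" for j
    unfolding cS unfolding S_def sum_product
  proof (intro sum.cong refl)
    fix x y
    have "int j * (int y - int x) = - (int j * int x) + int j * int y" by (simp add: algebra_simps)
    then have "ee N (int j * (int y - int x)) = ee N (- (int j * int x)) * ee N (int j * int y)"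
      by (metis ee_add)
    then show "of_real (f x) * ee N (- (int j * int x)) * (of_real (f y) * ee N (int j * int y)) =
      of_real (f x * f y) * ee N (int j * (int y - int x))" by simp
  qed
  have "(\<Sum>j<N. S j * cnj (S j)) = (\<Sum>x<N. \<Sum>y<N. of_real (f x * f y) * (\<Sum>j<N. ee N (int j * (int y - int x))))"
    unfolding prod sum_distrib_left by (subst sum.swap, rule sum.cong[OF refl], rule sum.swap)
  also have "\<dots> = (\<Sum>x<N. \<Sum>y<N. of_real (f x * f y) * (if x = y then of_nat N else 0))"
    by (intro sum.cong refl) (simp add: orth[OF assms] dvd_diff_lt)
  also have "\<dots> = (\<Sum>x<N. of_nat N * of_real ((f x)^2))"
  proof (rule sum.cong[OF refl])
    fix x assume "x \<in> {..<N}"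
    have "(\<Sum>y<N. of_real (f x * f y) * (if x = y then of_nat N else 0)) =
        (\<Sum>y<N. if x = y then of_real (f x * f y) * of_nat N else (0::complex))"
      by (rule sum.cong) auto
    also have "\<dots> = of_real (f x * f x) * of_nat N" using \<open>x \<in> {..<N}\<close> by (simp add: sum.delta)
    finally show "(\<Sum>y<N. of_real (f x * f y) * (if x = y then of_nat N else 0)) = (of_nat N * of_real ((f x)^2) :: complex)"
      by (simp add: power2_eq_square mult.commute)
  qed
  also have "\<dots> = of_nat N * (\<Sum>x<N. of_real ((f x)^2))"
    by (simp add: sum_distrib_left)
  finally have main: "(\<Sum>j<N. S j * cnj (S j)) = of_nat N * (\<Sum>x<N. of_real ((f x)^2))" .
  have "complex_of_real (\<Sum>j<N. (norm (fhat N f (int j)))^2) = (\<Sum>j<N. fhat N f (int j) * cnj (fhat N f (int j)))"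
    unfolding of_real_sum by (intro sum.cong refl) (rule complex_norm_square)
  also have "\<dots> = (\<Sum>j<N. (1 / of_nat N)^2 * (S j * cnj (S j)))"
    by (simp add: fhat_ee S_def power2_eq_square algebra_simps)
  also have "\<dots> = (1 / of_nat N)^2 * (of_nat N * (\<Sum>x<N. of_real ((f x)^2)))"
    by (simp add: sum_distrib_left[symmetric] main)
  also have "\<dots> = complex_of_real ((1 / real N) * (\<Sum>x<N. (f x)^2))"
    using assms by (simp add: power2_eq_square field_simps)
  finally show ?thesis by (simp only: of_real_eq_iff)
qed



lemma ee_cong: "N > 0 \<Longrightarrow> a mod int N = b mod int N \<Longrightarrow> ee N a = ee N b"
  by (metis ee_mod)

lemma sum_by_res:
  fixes g :: "nat \<Rightarrow> 'b::comm_monoid_add"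
  shows "(\<Sum>k<24. \<Sum>x\<in>{x. x < q \<and> x mod 24 = k}. g x) = (\<Sum>x<q. g x)"
proof -
  have "(\<Sum>k\<in>{..<24}. \<Sum>x\<in>{x\<in>{..<q}. x mod 24 = k}. g x) = (\<Sum>x\<in>{..<q}. g x)"
    by (rule sum.group) auto
  then show ?thesis by (simp add: lessThan_def)
qed

lemma avg_sum:
  "(\<Sum>k<24. avg24 q w k) = (24 / real q) * (\<Sum>x<q. w x)"
proof -
  have "(\<Sum>k<24. avg24 q w k) = (24 / real q) * (\<Sum>k<24. \<Sum>x\<in>{x. x < q \<and> x mod 24 = k}. w x)"
    unfolding avg24_def sum_distrib_left by (intro sum.cong refl) simp
  then show ?thesis by (simp add: sum_by_res)
qed

lemma fhat_mult:
  fixes q c :: nat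
  assumes "q = 24 * c" "c > 0"
  shows "fhat q w (int (j * c)) = fhat 24 (avg24 q w) (int j)"
proof -
  have qpos: "q > 0" using assms by simp
  have e1: "ee q (- (int (j * c) * int x)) = ee 24 (- (int j * int (x mod 24)))" for x
  proof -
    have "ee q (- (int (j * c) * int x)) = ee 24 (- (int j * int x))"
      unfolding ee_def using assms by (simp add: field_simps)
    also have "\<dots> = ee 24 (- (int j * int (x mod 24)))"
    proof (rule ee_cong)
      have "(- (int j * int (x mod 24))) mod int 24 = (- ((int j * (int x mod 24)) mod 24)) mod 24"
        by (simp add: zmod_int mod_minus_eq)
      also have "\<dots> = (- ((int j * int x) mod 24)) mod 24" by (simp add: mod_mult_right_eq)
      also have "\<dots> = (- (int j * int x)) mod int 24" by (simp add: mod_minus_eq)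
      finally show "(- (int j * int x)) mod int 24 = (- (int j * int (x mod 24))) mod int 24" by simp
    qed simp
    finally show ?thesis .
  qed
  have "fhat q w (int (j * c)) = (1 / of_nat q) * (\<Sum>x<q. of_real (w x) * ee 24 (- (int j * int (x mod 24))))"
    unfolding fhat_ee e1 ..
  also have "(\<Sum>x<q. of_real (w x) * ee 24 (- (int j * int (x mod 24)))) =
     (\<Sum>k<24. \<Sum>x\<in>{x. x < q \<and> x mod 24 = k}. of_real (w x) * ee 24 (- (int j * int (x mod 24))))"
    by (rule sum_by_res[symmetric])
  also have "\<dots> = (\<Sum>k<24. of_real (\<Sum>x\<in>{x. x < q \<and> x mod 24 = k}. w x) * ee 24 (- (int j * int k)))"
    unfolding of_real_sum sum_distrib_right by (intro sum.cong refl) auto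
  also have "(1 / of_nat q) * \<dots> = (1 / of_nat 24) * (\<Sum>k<24. of_real (avg24 q w k) * ee 24 (- (int j * int k)))"
    unfolding sum_distrib_left avg24_def
    by (intro sum.cong refl) (simp add: assms flip: sum_divide_distrib)
  also have "\<dots> = fhat 24 (avg24 q w) (int j)"
    unfolding fhat_ee by simp
  finally show ?thesis .
qed

lemma M0_eq:
  fixes q c :: nat
  assumes "q = 24 * c" "c > 0"
  shows "{m. m < q \<and> q dvd 24 * m} = (\<lambda>j. j * c) ` {..<24}"
proof (intro set_eqI iffI)
  fix m assume "m \<in> {m. m < q \<and> q dvd 24 * m}"
  then have "m < q" "24 * c dvd 24 * m" using assms by auto
  then have "c dvd m" by simp
  then obtain j where "m = c * j" by blast
  with \<open>m < q\<close> assms have "j < 24" by simp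
  with \<open>m = c*j\<close> show "m \<in> (\<lambda>j. j * c) ` {..<24}" by (auto simp: mult.commute)
next
  fix m assume "m \<in> (\<lambda>j. j * c) ` {..<24}"
  then obtain j where "j < 24" "m = j * c" by auto
  then show "m \<in> {m. m < q \<and> q dvd 24 * m}" using assms by auto
qed

lemma M1_bound:
  assumes "q > 0" "24 dvd q" "\<And>x. x < q \<Longrightarrow> 0 \<le> w x \<and> w x \<le> 1"
  shows "(\<Sum>m\<in>{m. m < q \<and> \<not> q dvd 24 * m}. (norm (fhat q w (int m)))^2)
     \<le> (1/24) * (\<Sum>k<24. avg24 q w k - (avg24 q w k)^2)"
proof -
  obtain c where qc: "q = 24 * c" using assms(2) by blast
  then have cpos: "c > 0" using assms(1) by simp
  let ?g = "\<lambda>m. (norm (fhat q w (int m)))^2"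
  have split: "(\<Sum>m<q. ?g m) = (\<Sum>m\<in>{m. m < q \<and> q dvd 24 * m}. ?g m) + (\<Sum>m\<in>{m. m < q \<and> \<not> q dvd 24 * m}. ?g m)"
  proof -
    have "{..<q} = {m. m < q \<and> q dvd 24 * m} \<union> {m. m < q \<and> \<not> q dvd 24 * m}" by auto
    then show ?thesis by (simp only:) (rule sum.union_disjoint, auto)
  qed
  have inj: "inj_on (\<lambda>j. j * c) {..<24}" using cpos by (auto simp: inj_on_def)
  have M0: "(\<Sum>m\<in>{m. m < q \<and> q dvd 24 * m}. ?g m) = (1/24) * (\<Sum>k<24. (avg24 q w k)^2)"
    unfolding M0_eq[OF qc cpos] sum.reindex[OF inj] o_def fhat_mult[OF qc cpos]
    using parseval[of 24 "avg24 q w"] by simp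
  have tot: "(\<Sum>m<q. ?g m) \<le> (1/24) * (\<Sum>k<24. avg24 q w k)"
  proof -
    have "(\<Sum>m<q. ?g m) = (1 / real q) * (\<Sum>x<q. (w x)^2)" by (rule parseval[OF assms(1)])
    also have "\<dots> \<le> (1 / real q) * (\<Sum>x<q. w x)"
    proof (intro mult_left_mono sum_mono)
      fix x assume "x \<in> {..<q}"
      then have "0 \<le> w x" "w x \<le> 1" using assms(3) by auto
      then show "(w x)^2 \<le> w x" by (simp add: power2_eq_square mult_left_le)
    qed simp
    also have "\<dots> = (1/24) * (\<Sum>k<24. avg24 q w k)"
      using assms(1) by (simp add: avg_sum)
    finally show ?thesis .
  qed
  show ?thesis using split M0 tot by (simp add: sum_subtractf right_diff_distrib)
qed



lemma fq_hat:
  assumes "q > 0"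
  shows "fhat q (fq q) (- int m) = (1 / of_nat q) * (\<Sum>x<q. ee q (int m * int (x^2)))"
proof -
  have "(\<Sum>t<q. of_real (fq q t) * ee q (- (- int m * int t))) =
        (\<Sum>t<q. \<Sum>x\<in>{x\<in>{..<q}. x^2 mod q = t}. ee q (int m * int (x^2 mod q)))"
  proof (rule sum.cong[OF refl])
    fix t assume "t \<in> {..<q}"
    then have "{x. x < q \<and> x^2 mod q = t mod q} = {x\<in>{..<q}. x^2 mod q = t}" by auto
    then have "of_real (fq q t) = (of_nat (card {x\<in>{..<q}. x^2 mod q = t}) :: complex)"
      unfolding fq_def by simp
    then show "of_real (fq q t) * ee q (- (- int m * int t)) = (\<Sum>x\<in>{x\<in>{..<q}. x^2 mod q = t}. ee q (int m * int (x^2 mod q)))"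
      by simp
  qed
  also have "\<dots> = (\<Sum>x<q. ee q (int m * int (x^2 mod q)))"
    by (rule sum.group) (use assms in auto)
  also have "\<dots> = (\<Sum>x<q. ee q (int m * int (x^2)))"
  proof (rule sum.cong[OF refl], rule ee_cong[OF assms])
    fix x
    show "int m * int (x^2 mod q) mod int q = int m * int (x^2) mod int q"
      by (simp add: zmod_int mod_mult_right_eq)
  qed
  finally show ?thesis unfolding fhat_ee by simp
qed

lemma shift_bij:
  fixes q y :: nat
  assumes "q > 0"
  shows "bij_betw (\<lambda>h. (y + h) mod q) {..<q} {..<q}"
proof -
  have inj: "inj_on (\<lambda>h. (y + h) mod q) {..<q}"
  proof (rule inj_onI)
    fix a b assume a: "a \<in> {..<q}" and b: "b \<in> {..<q}" and eq: "(y + a) mod q = (y + b) mod q"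
    have key: "False" if "u < v" "u < q" "v < q" "(y + u) mod q = (y + v) mod q" for u v
    proof -
      have "q dvd (y + v) - (y + u)" using that mod_eq_dvd_iff_nat[of "y + u" "y + v" q] by auto
      then have "q dvd v - u" by simp
      then have "q \<le> v - u" using that by (simp add: dvd_imp_le)
      then show False using that by linarith
    qed
    show "a = b"
      using key[of a b] key[of b a] a b eq by (metis lessThan_iff linorder_neqE_nat)
  qed
  have sub: "(\<lambda>h. (y + h) mod q) ` {..<q} \<subseteq> {..<q}" using assms by auto
  have "(\<lambda>h. (y + h) mod q) ` {..<q} = {..<q}"
    by (rule endo_inj_surj[OF _ sub inj]) simp
  with inj show ?thesis by (simp add: bij_betw_def)
qed

lemma small_dvd:
  fixes q m h :: nat
  assumes "q dvd 2 * m * h" "0 < h" "h < 5"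
  shows "q dvd 24 * m"
proof -
  have "2 * m * h dvd 24 * m"
  proof -
    consider "h = 1" | "h = 2" | "h = 3" | "h = 4" using assms(2,3) by linarith
    then show ?thesis
    proof cases
      case 1 then show ?thesis by (intro dvdI[of _ _ 12]) simp
    next
      case 2 then show ?thesis by (intro dvdI[of _ _ 6]) simp
    next
      case 3 then show ?thesis by (intro dvdI[of _ _ 4]) simp
    next
      case 4 then show ?thesis by (intro dvdI[of _ _ 3]) simp
    qed
  qed
  with assms(1) show ?thesis by (rule dvd_trans)
qed

lemma card_H:
  fixes q m :: nat
  assumes "q > 0" "24 dvd q" "\<not> q dvd 24 * m"
  shows "5 * card {h\<in>{..<q}. q dvd 2 * m * h} \<le> q"
proof -
  define H where "H = {h\<in>{..<q}. q dvd 2 * m * h}"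
  have ge5: "h \<ge> 5" if "h \<in> H" "h > 0" for h
    using small_dvd[of q m h] that assms(3) unfolding H_def by force
  have q24: "q \<ge> 24" using assms(1,2) by (simp add: dvd_imp_le)
  have diff: "h' - h \<in> H" if "h \<in> H" "h' \<in> H" "h \<le> h'" for h h'
  proof -
    have "q dvd 2 * m * h' - 2 * m * h" using that unfolding H_def by (auto intro: dvd_diff_nat)
    moreover have "2 * m * h' - 2 * m * h = 2 * m * (h' - h)" by (simp add: diff_mult_distrib2)
    ultimately show ?thesis using that unfolding H_def by auto
  qed
  have upper: "h div 5 < q div 5" if "h \<in> H" for h
  proof (cases "h = 0")
    case True then show ?thesis using q24 by simp
  next
    case False
    have "q dvd 2 * m * q - 2 * m * h" using that unfolding H_def by (auto intro: dvd_diff_nat)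
    moreover have "2 * m * q - 2 * m * h = 2 * m * (q - h)" by (simp add: diff_mult_distrib2)
    ultimately have "q - h \<in> H" using that False unfolding H_def by auto
    moreover have "q - h > 0" using that unfolding H_def by auto
    ultimately have "q - h \<ge> 5" using ge5 by blast
    then have "h + 5 \<le> q" by linarith
    then have "(h + 5) div 5 \<le> q div 5" by (rule div_le_mono)
    then show ?thesis by simp
  qed
  have inj: "inj_on (\<lambda>h. h div 5) H"
  proof (rule inj_onI)
    fix a b assume a: "a \<in> H" and b: "b \<in> H" and eq: "a div 5 = b div 5"
    show "a = b"
    proof (rule ccontr)
      assume "a \<noteq> b"
      then consider "a < b" | "b < a" by linarith
      then show False
      proof cases
        case 1
        then have "b - a \<ge> 5" using ge5[OF diff[OF a b]] by linarith
        then show False using eq by linarith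
      next
        case 2
        then have "a - b \<ge> 5" using ge5[OF diff[OF b a]] by linarith
        then show False using eq by linarith
      qed
    qed
  qed
  have "card H \<le> card {..<q div 5}"
    by (rule card_inj_on_le[OF inj]) (use upper in auto)
  then show ?thesis unfolding H_def by simp
qed



lemma gauss_sq:
  fixes q m :: nat
  assumes "q > 0"
  defines "S \<equiv> (\<Sum>x<q. ee q (int m * int (x^2)))"
  shows "(norm S)^2 \<le> real q * real (card {h\<in>{..<q}. q dvd 2 * m * h})"
proof -
  have shift: "ee q (int m * int (((y + h) mod q)^2)) * ee q (- (int m * int (y^2)))
      = ee q (int m * int (h^2)) * ee q (int y * int (2 * m * h))" for y h
  proof -
    have "ee q (int m * int (((y + h) mod q)^2)) = ee q (int m * int ((y + h)^2))"
    proof (rule ee_cong[OF assms(1)])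
      have "int (((y + h) mod q)^2) mod int q = int ((y + h)^2) mod int q"
        by (simp add: zmod_int power_mod)
      then show "int m * int (((y + h) mod q)^2) mod int q = int m * int ((y + h)^2) mod int q"
        by (metis mod_mult_right_eq)
    qed
    moreover have "int m * int ((y + h)^2) + (- (int m * int (y^2))) = int m * int (h^2) + int y * int (2 * m * h)"
      by (simp add: power2_eq_square algebra_simps)
    ultimately show ?thesis by (metis ee_add)
  qed
  have inner: "(\<Sum>x<q. ee q (int m * int (x^2)) * ee q (- (int m * int (y^2))))
      = (\<Sum>h<q. ee q (int m * int (h^2)) * ee q (int y * int (2 * m * h)))" for y
  proof -
    have "(\<Sum>x<q. ee q (int m * int (x^2)) * ee q (- (int m * int (y^2))))
       = (\<Sum>h<q. ee q (int m * int (((y + h) mod q)^2)) * ee q (- (int m * int (y^2))))"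
      using sum.reindex_bij_betw[OF shift_bij[OF assms(1), of y],
          of "\<lambda>x. ee q (int m * int (x^2)) * ee q (- (int m * int (y^2)))"] by simp
    then show ?thesis by (simp only: shift)
  qed
  have "S * cnj S = (\<Sum>y<q. \<Sum>x<q. ee q (int m * int (x^2)) * ee q (- (int m * int (y^2))))"
    unfolding S_def cnj_sum ee_cnj sum_product by (rule sum.swap)
  also have "\<dots> = (\<Sum>y<q. \<Sum>h<q. ee q (int m * int (h^2)) * ee q (int y * int (2 * m * h)))"
    by (simp only: inner)
  also have "\<dots> = (\<Sum>h<q. ee q (int m * int (h^2)) * (\<Sum>y<q. ee q (int y * int (2 * m * h))))"
    unfolding sum_distrib_left by (rule sum.swap)
  also have "\<dots> = (\<Sum>h<q. ee q (int m * int (h^2)) * (if q dvd 2 * m * h then of_nat q else 0))"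
    by (intro sum.cong refl) (simp only: orth[OF assms(1)] of_nat_dvd_iff)
  finally have eq: "S * cnj S = \<dots>" .
  have "(norm S)^2 = norm (S * cnj S)" by (simp add: norm_mult power2_eq_square)
  also have "\<dots> \<le> (\<Sum>h<q. norm (ee q (int m * int (h^2)) * (if q dvd 2 * m * h then of_nat q else (0::complex))))"
    unfolding eq by (rule norm_sum)
  also have "\<dots> = (\<Sum>h<q. if q dvd 2 * m * h then real q else 0)"
    by (intro sum.cong refl) (simp add: norm_mult)
  also have "\<dots> = real q * real (card {h\<in>{..<q}. q dvd 2 * m * h})"
    by (simp add: sum.If_cases Int_def)
  finally show ?thesis .
qed

lemma gauss_bound:
  fixes q m :: nat
  assumes "q > 0" "24 dvd q" "\<not> q dvd 24 * m"
  shows "norm (fhat q (fq q) (- int m)) \<le> 1 / sqrt 5"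
proof -
  define S where "S = (\<Sum>x<q. ee q (int m * int (x^2)))"
  have n: "norm (fhat q (fq q) (- int m)) = norm S / real q"
    unfolding fq_hat[OF assms(1)] S_def by (simp add: norm_mult norm_divide)
  have c: "5 * real (card {h\<in>{..<q}. q dvd 2 * m * h}) \<le> real q"
    using card_H[OF assms] by linarith
  have "(norm S)^2 \<le> real q * real (card {h\<in>{..<q}. q dvd 2 * m * h})"
    unfolding S_def by (rule gauss_sq[OF assms(1)])
  also have "\<dots> \<le> real q * (real q / 5)" using c by (intro mult_left_mono) auto
  finally have s2: "(norm S)^2 \<le> (real q)^2 / 5" by (simp add: power2_eq_square)
  have "(norm (fhat q (fq q) (- int m)))^2 \<le> 1 / 5"
    unfolding n using s2 assms(1) by (simp add: power_divide divide_le_eq)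
  then have "norm (fhat q (fq q) (- int m)) \<le> sqrt (1/5)"
    by (simp add: real_le_rsqrt)
  then show ?thesis by (simp add: real_sqrt_divide)
qed



lemma cs_sqrt:
  fixes a b :: "nat \<Rightarrow> real"
  shows "(\<Sum>i\<in>I. a i * b i) \<le> sqrt (\<Sum>i\<in>I. (a i)^2) * sqrt (\<Sum>i\<in>I. (b i)^2)"
proof -
  have "(\<Sum>i\<in>I. a i * b i) \<le> sqrt ((\<Sum>i\<in>I. a i * b i)^2)" by simp
  also have "\<dots> \<le> sqrt ((\<Sum>i\<in>I. (a i)^2) * (\<Sum>i\<in>I. (b i)^2))"
    by (rule real_sqrt_le_mono[OF Cauchy_Schwarz_ineq_sum])
  finally show ?thesis by (simp add: real_sqrt_mult)
qed

theorem lemma3p5: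
  fixes q :: nat and wA wB :: "nat \<Rightarrow> real"
  assumes "q > 0" and "24 dvd q"
    and "\<And>x. x < q \<Longrightarrow> 0 \<le> wA x \<and> wA x \<le> 1"
    and "\<And>x. x < q \<Longrightarrow> 0 \<le> wB x \<and> wB x \<le> 1"
  shows "norm (\<Sum>m\<in>{m. m < q \<and> \<not> q dvd 24 * m}.
              fhat q wA (int m) * fhat q wB (int m) * fhat q (fq q) (- int m))
         \<le> 1 / (24 * sqrt 5)
            * sqrt (\<Sum>k<24. avg24 q wA k - (avg24 q wA k)^2)
            * sqrt (\<Sum>k<24. avg24 q wB k - (avg24 q wB k)^2)"
proof -
  define M where "M = {m. m < q \<and> \<not> q dvd 24 * m}"
  define A where "A m = norm (fhat q wA (int m))" for m
  define B where "B m = norm (fhat q wB (int m))" for m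
  define SA where "SA = (\<Sum>k<24. avg24 q wA k - (avg24 q wA k)^2)"
  define SB where "SB = (\<Sum>k<24. avg24 q wB k - (avg24 q wB k)^2)"
  have hA: "(\<Sum>m\<in>M. (A m)^2) \<le> (1/24) * SA"
    unfolding M_def A_def SA_def by (rule M1_bound[OF assms(1,2,3)])
  have hB: "(\<Sum>m\<in>M. (B m)^2) \<le> (1/24) * SB"
    unfolding M_def B_def SB_def by (rule M1_bound[OF assms(1,2,4)])
  have "norm (\<Sum>m\<in>M. fhat q wA (int m) * fhat q wB (int m) * fhat q (fq q) (- int m))
      \<le> (\<Sum>m\<in>M. norm (fhat q wA (int m) * fhat q wB (int m) * fhat q (fq q) (- int m)))"
    by (rule norm_sum)
  also have "\<dots> \<le> (\<Sum>m\<in>M. A m * B m * (1 / sqrt 5))"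
  proof (rule sum_mono)
    fix m assume "m \<in> M"
    then have "norm (fhat q (fq q) (- int m)) \<le> 1 / sqrt 5"
      unfolding M_def using gauss_bound[OF assms(1,2)] by auto
    then show "norm (fhat q wA (int m) * fhat q wB (int m) * fhat q (fq q) (- int m)) \<le> A m * B m * (1 / sqrt 5)"
      unfolding A_def B_def norm_mult by (intro mult_left_mono) auto
  qed
  also have "\<dots> = (1 / sqrt 5) * (\<Sum>m\<in>M. A m * B m)"
    by (simp add: sum_distrib_left mult.commute)
  also have "\<dots> \<le> (1 / sqrt 5) * (sqrt (\<Sum>m\<in>M. (A m)^2) * sqrt (\<Sum>m\<in>M. (B m)^2))"
    by (intro mult_left_mono cs_sqrt) auto
  also have "\<dots> \<le> (1 / sqrt 5) * (sqrt ((1/24) * SA) * sqrt ((1/24) * SB))"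
  proof -
    have n1: "0 \<le> (\<Sum>m\<in>M. (A m)^2)" "0 \<le> (\<Sum>m\<in>M. (B m)^2)" by (simp_all add: sum_nonneg)
    show ?thesis using hA hB n1 by (intro mult_left_mono mult_mono real_sqrt_le_mono) auto
  qed
  also have "\<dots> = 1 / (24 * sqrt 5) * sqrt SA * sqrt SB"
  proof -
    have "sqrt ((1/24) * SA) * sqrt ((1/24) * SB) = (1/24) * (sqrt SA * sqrt SB)"
      by (simp add: real_sqrt_mult real_sqrt_divide)
    then show ?thesis by (simp add: field_simps)
  qed
  finally show ?thesis unfolding M_def SA_def SB_def .
qed

end
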